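(* (Bicomplex Schwarz inequality.) Let $M$ be a free $\mathbb{T}$-module with a finite $\mathbb{T}$-basis, $V$ its associated complex vector space, and $(\cdot,\cdot)$ a bicomplex scalar product on $M$ which is hyperbolic positive and closed on $V$. Then for all $\widehat X,\widehat Y\in M$, $$|(\widehat X,\widehat Y)|\le\big|(\widehat X,\widehat X)^{1/2}(\widehat Y,\widehat Y)^{1/2}\big|\le\sqrt2\,\|\widehat X\|\,\|\widehat Y\|.$$
   Context: Bicomplex numbers: $\mathbb{T}=\{z_1+z_2\mathbf{i_2}: z_1,z_2\in\mathbb{C}(\mathbf{i_1})\}$, $\mathbb{C}(\mathbf{i_1})=\{x+y\mathbf{i_1}: x,y\in\mathbb{R}\}$, $\mathbf{i_1}^2=\mathbf{i_2}^2=-1$, $\mathbf{i_1}\mathbf{i_2}=\mathbf{i_2}\mathbf{i_1}=\mathbf{j}$, $\mathbf{j}^2=1$ (commutative). Hyperbolic numbers $\mathbb{D}=\{x+y\mathbf{j}:x,y\in\mathbb{R}\}$. Idempotents $\mathbf{e_1}=(1+\mathbf{j})/2$, $\mathbf{e_2}=(1-\mathbf{j})/2$. For $w=z_1+z_2\mathbf{i_2}\in\mathbb{T}$, $|w|=\sqrt{|z_1|^2+|z_2|^2}$ (Euclidean norm in $\mathbb{R}^4$). Conjugation: $(z_1+z_2\mathbf{i_2})^{\dagger_3}=\overline{z_1}-\overline{z_2}\mathbf{i_2}$. $\mathbb{D}^+=\{a\mathbf{e_1}+b\mathbf{e_2}: a,b\ge 0\}$, and $(a\mathbf{e_1}+b\mathbf{e_2})^{1/2}=\sqrt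 a\,\mathbf{e_1}+\sqrt b\,\mathbf{e_2}$. $M$ has $\mathbb{T}$-basis $\{\widehat m_1,\dots,\widehat m_n\}$, $V=\{\sum x_l\widehat m_l: x_l\in\mathbb{C}(\mathbf{i_1})\}$; for $\widehat X=\sum x_l\widehat m_l$ with $x_l=x_{1l}\mathbf{e_1}+x_{2l}\mathbf{e_2}$, $x_{kl}\in\mathbb{C}(\mathbf{i_1})$, put $\widehat X_{\mathbf{e_k}}=\sum_l x_{kl}\widehat m_l\in V$. A bicomplex scalar product is a map $(\cdot,\cdot):M\times M\to\mathbb{T}$ with: $(\widehat X,\widehat Y_1+\widehat Y_2)=(\widehat X,\widehat Y_1)+(\widehat X,\widehat Y_2)$; $(\widehat X,\alpha\widehat Y)=\alpha(\widehat X,\widehat Y)$ for $\alpha\in\mathbb{T}$; $(\widehat X,\widehat Y)=(\widehat Y,\widehat X)^{\dagger_3}$; $(\widehat X,\widehat X)=0\iff\widehat X=0$. Hyperbolic positive: $(\widehat X,\widehat X)\in\mathbb{D}^+$ for all $\widehat X$. Closed on $V$: $(\widehat X,\widehat Y)\in\mathbb{C}(\mathbf{i_1})$ for $\widehat X,\widehat Y\in V$. For $\widehat Z\in V$, $\|\widehat Z\|=(\widehat Z,\widehat Z)^{1/2}$; for $\widehat X\in M$, $\|\widehat X\|:=\big|(\widehat X,\widehat X)^{1/2}\big|=\big((\|\widehat X_{\mathbf{e_1}}\|^2+\|\widehat X_{\mathbf{e_2}}\|^2)/2\big)^{1/2}$. *)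

theory Defs
  imports Complex_Main
begin

text \<open>Bicomplex numbers z1 + z2 i2 are represented as pairs (z1, z2) of complex numbers
(complex numbers play the role of C(i1), with i1 = ii).\<close>

type_synonym bicomplex = "complex \<times> complex"

definition bc_add :: "bicomplex \<Rightarrow> bicomplex \<Rightarrow> bicomplex" where
  "bc_add w v = (fst w + fst v, snd w + snd v)"

definition bc_mult :: "bicomplex \<Rightarrow> bicomplex \<Rightarrow> bicomplex" where
  "bc_mult w v = (fst w * fst v - snd w * snd v, fst w * snd v + snd w * fst v)"

definition bc_zero :: bicomplex where
  "bc_zero = (0, 0)"

definition bc_cnj3 :: "bicomplex \<Rightarrow> bicomplex" where
  "bc_cnj3 w = (cnj (fst w), - cnj (snd w))"

definition bc_norm :: "bicomplex \<Rightarrow> real" where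
  "bc_norm w = sqrt ((cmod (fst w))\<^sup>2 + (cmod (snd w))\<^sup>2)"

definition bc_in_C1 :: "bicomplex \<Rightarrow> bool" where
  "bc_in_C1 w \<longleftrightarrow> snd w = 0"

text \<open>The idempotents e1 = (1+j)/2, e2 = (1-j)/2, with j = i1 i2 = (0, ii).\<close>
definition bc_e1 :: bicomplex where "bc_e1 = (1/2, \<i>/2)"
definition bc_e2 :: bicomplex where "bc_e2 = (1/2, -\<i>/2)"

definition bc_of_real :: "real \<Rightarrow> bicomplex" where
  "bc_of_real r = (complex_of_real r, 0)"

text \<open>Idempotent components: w = (z1 - i1 z2) e1 + (z1 + i1 z2) e2.\<close>
definition bc_idem1 :: "bicomplex \<Rightarrow> complex" where
  "bc_idem1 w = fst w - \<i> * snd w"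
definition bc_idem2 :: "bicomplex \<Rightarrow> complex" where
  "bc_idem2 w = fst w + \<i> * snd w"

definition hyp_pos :: "bicomplex set" where
  "hyp_pos = {bc_add (bc_mult (bc_of_real a) bc_e1) (bc_mult (bc_of_real b) bc_e2)
               | a b. a \<ge> 0 \<and> b \<ge> 0}"

definition hyp_sqrt :: "bicomplex \<Rightarrow> bicomplex" where
  "hyp_sqrt w = bc_add (bc_mult (bc_of_real (sqrt (Re (bc_idem1 w)))) bc_e1)
                       (bc_mult (bc_of_real (sqrt (Re (bc_idem2 w)))) bc_e2)"

text \<open>The free T-module M with finite T-basis m_l (l in the finite type 'n) is identified
with its coordinate space: X = sum_l x_l m_l corresponds to (\<lambda>l. x_l).\<close>

definition mod_add :: "('n \<Rightarrow> bicomplex) \<Rightarrow> ('n \<Rightarrow> bicomplex) \<Rightarrow> ('n \<Rightarrow> bicomplex)" where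
  "mod_add X Y = (\<lambda>l. bc_add (X l) (Y l))"

definition mod_smult :: "bicomplex \<Rightarrow> ('n \<Rightarrow> bicomplex) \<Rightarrow> ('n \<Rightarrow> bicomplex)" where
  "mod_smult \<alpha> Y = (\<lambda>l. bc_mult \<alpha> (Y l))"

definition mod_zero :: "'n \<Rightarrow> bicomplex" where
  "mod_zero = (\<lambda>l. bc_zero)"

definition mod_V :: "('n \<Rightarrow> bicomplex) set" where
  "mod_V = {X. \<forall>l. bc_in_C1 (X l)}"

definition bicomplex_scalar_product ::
  "(('n::finite \<Rightarrow> bicomplex) \<Rightarrow> ('n \<Rightarrow> bicomplex) \<Rightarrow> bicomplex) \<Rightarrow> bool" where
  "bicomplex_scalar_product sp \<longleftrightarrow>
     (\<forall>X Y1 Y2. sp X (mod_add Y1 Y2) = bc_add (sp X Y1) (sp X Y2)) \<and>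
     (\<forall>X Y \<alpha>. sp X (mod_smult \<alpha> Y) = bc_mult \<alpha> (sp X Y)) \<and>
     (\<forall>X Y. sp X Y = bc_cnj3 (sp Y X)) \<and>
     (\<forall>X. sp X X = bc_zero \<longleftrightarrow> X = mod_zero)"

definition hyperbolic_positive ::
  "(('n \<Rightarrow> bicomplex) \<Rightarrow> ('n \<Rightarrow> bicomplex) \<Rightarrow> bicomplex) \<Rightarrow> bool" where
  "hyperbolic_positive sp \<longleftrightarrow> (\<forall>X. sp X X \<in> hyp_pos)"

definition closed_on_V ::
  "(('n \<Rightarrow> bicomplex) \<Rightarrow> ('n \<Rightarrow> bicomplex) \<Rightarrow> bicomplex) \<Rightarrow> bool" where
  "closed_on_V sp \<longleftrightarrow> (\<forall>X\<in>mod_V. \<forall>Y\<in>mod_V. bc_in_C1 (sp X Y))"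

definition mod_norm ::
  "(('n \<Rightarrow> bicomplex) \<Rightarrow> ('n \<Rightarrow> bicomplex) \<Rightarrow> bicomplex) \<Rightarrow> ('n \<Rightarrow> bicomplex) \<Rightarrow> real" where
  "mod_norm sp X = bc_norm (hyp_sqrt (sp X X))"

end

theory Submission imports Defs begin

lemma cs_abstract:
  fixes f :: "'a \<Rightarrow> 'a \<Rightarrow> complex"
  assumes add: "\<And>X Y Z. f X (ad Y Z) = f X Y + f X Z"
    and sm: "\<And>X Y c. f X (sm c Y) = c * f X Y"
    and herm: "\<And>X Y. f X Y = cnj (f Y X)"
    and pos: "\<And>X. Re (f X X) \<ge> 0"
  shows "(cmod (f X Y))\<^sup>2 \<le> Re (f X X) * Re (f Y Y)"
proof -
  have realim: "Im (f Z Z) = 0" for Z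
    using herm[of Z Z] by (metis cnj.sel(2) equal_neg_zero)
  define a where "a = Re (f X X)"
  define b where "b = Re (f Y Y)"
  define p where "p = f X Y"
  have fXX: "f X X = of_real a" using realim[of X] a_def by (simp add: complex_eq_iff)
  have fYY: "f Y Y = of_real b" using realim[of Y] b_def by (simp add: complex_eq_iff)
  have fYX: "f Y X = cnj p" using herm[of Y X] p_def by simp
  have key: "f (ad (sm c X) Y) (ad (sm c X) Y) = c*cnj c * f X X + c * f Y X + cnj c * f X Y + f Y Y" for c
  proof -
    let ?Z = "ad (sm c X) Y"
    have "f ?Z ?Z = c * f ?Z X + f ?Z Y" by (simp add: add sm)
    also have "f ?Z X = cnj (c * f X X + f X Y)" by (metis herm add sm)
    also have "f ?Z Y = cnj (c * f Y X + f Y Y)" by (metis herm add sm)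
    finally show ?thesis using herm[of X X] herm[of Y Y] herm[of X Y]
      by (simp add: algebra_simps)
  qed
  have ineq: "0 \<le> t\<^sup>2 * (cmod p)\<^sup>2 * a - 2 * t * (cmod p)\<^sup>2 + b" for t :: real
  proof -
    have "0 \<le> Re (f (ad (sm (- of_real t * p) X) Y) (ad (sm (- of_real t * p) X) Y))" by (rule pos)
    also have "\<dots> = t\<^sup>2 * (cmod p)\<^sup>2 * a - 2 * t * (cmod p)\<^sup>2 + b"
      unfolding key fXX fYY fYX p_def[symmetric] cmod_power2
      by (simp add: power2_eq_square algebra_simps)
    finally show ?thesis .
  qed
  have a0: "a \<ge> 0" "b \<ge> 0" using pos a_def b_def by auto
  have "(cmod p)\<^sup>2 \<le> a * b"
  proof (cases "a = 0")
    case True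
    show ?thesis
    proof (rule ccontr)
      assume "\<not> ?thesis"
      hence pp: "(cmod p)\<^sup>2 > 0" using True by simp
      have "0 \<le> - (2 * ((b+1) / (2 * (cmod p)\<^sup>2)) * (cmod p)\<^sup>2) + b"
        using ineq[of "(b+1) / (2 * (cmod p)\<^sup>2)"] True by simp
      moreover have "2 * ((b+1) / (2 * (cmod p)\<^sup>2)) * (cmod p)\<^sup>2 = b + 1" using pp by simp
      ultimately show False by linarith
    qed
  next
    case False
    hence ap: "a > 0" using a0 by simp
    have "0 \<le> (1/a)\<^sup>2 * (cmod p)\<^sup>2 * a - 2 * (1/a) * (cmod p)\<^sup>2 + b" by (rule ineq)
    also have "\<dots> = (a * b - (cmod p)\<^sup>2) / a" using ap by (simp add: field_simps power2_eq_square)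
    finally show ?thesis using ap by (simp add: zero_le_divide_iff)
  qed
  thus ?thesis using a_def b_def p_def by simp
qed

lemma idem_add: "bc_idem1 (bc_add w v) = bc_idem1 w + bc_idem1 v" "bc_idem2 (bc_add w v) = bc_idem2 w + bc_idem2 v"
  by (simp_all add: bc_idem1_def bc_idem2_def bc_add_def algebra_simps)

lemma idem_mult: "bc_idem1 (bc_mult w v) = bc_idem1 w * bc_idem1 v" "bc_idem2 (bc_mult w v) = bc_idem2 w * bc_idem2 v"
  by (simp_all add: bc_idem1_def bc_idem2_def bc_mult_def algebra_simps)

lemma idem_cnj: "bc_idem1 (bc_cnj3 w) = cnj (bc_idem1 w)" "bc_idem2 (bc_cnj3 w) = cnj (bc_idem2 w)"
  by (simp_all add: bc_idem1_def bc_idem2_def bc_cnj3_def)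

lemma idem_C: "bc_idem1 (c, 0) = c" "bc_idem2 (c, 0) = c"
  by (simp_all add: bc_idem1_def bc_idem2_def)

lemma idem_e: "bc_idem1 bc_e1 = 1" "bc_idem2 bc_e1 = 0" "bc_idem1 bc_e2 = 0" "bc_idem2 bc_e2 = 1"
  by (simp_all add: bc_idem1_def bc_idem2_def bc_e1_def bc_e2_def)

lemma idem_ofreal: "bc_idem1 (bc_of_real r) = of_real r" "bc_idem2 (bc_of_real r) = of_real r"
  by (simp_all add: bc_idem1_def bc_idem2_def bc_of_real_def)

lemma norm_idem: "(bc_norm w)\<^sup>2 = ((cmod (bc_idem1 w))\<^sup>2 + (cmod (bc_idem2 w))\<^sup>2) / 2"
  unfolding bc_norm_def bc_idem1_def bc_idem2_def cmod_power2
  by (simp add: power2_eq_square algebra_simps)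

lemma hyp_pos_idem: "w \<in> hyp_pos \<Longrightarrow> Re (bc_idem1 w) \<ge> 0 \<and> Im (bc_idem1 w) = 0 \<and> Re (bc_idem2 w) \<ge> 0 \<and> Im (bc_idem2 w) = 0"
  unfolding hyp_pos_def by (auto simp: idem_add idem_mult idem_e idem_ofreal)

lemma hyp_sqrt_idem: "bc_idem1 (hyp_sqrt w) = of_real (sqrt (Re (bc_idem1 w)))"
   "bc_idem2 (hyp_sqrt w) = of_real (sqrt (Re (bc_idem2 w)))"
  unfolding hyp_sqrt_def by (simp_all add: idem_add idem_mult idem_e idem_ofreal)

theorem mainTheorem11:
  fixes sp :: "('n::finite \<Rightarrow> bicomplex) \<Rightarrow> ('n \<Rightarrow> bicomplex) \<Rightarrow> bicomplex"
    and X Y :: "'n \<Rightarrow> bicomplex"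
  assumes "bicomplex_scalar_product sp"
    and "hyperbolic_positive sp"
    and "closed_on_V sp"
  shows "bc_norm (sp X Y) \<le> bc_norm (bc_mult (hyp_sqrt (sp X X)) (hyp_sqrt (sp Y Y)))
       \<and> bc_norm (bc_mult (hyp_sqrt (sp X X)) (hyp_sqrt (sp Y Y)))
           \<le> sqrt 2 * mod_norm sp X * mod_norm sp Y"
proof -
  have spA: "\<And>A B C. sp A (mod_add B C) = bc_add (sp A B) (sp A C)"
    and spS: "\<And>A B c. sp A (mod_smult c B) = bc_mult c (sp A B)"
    and spC: "\<And>A B. sp A B = bc_cnj3 (sp B A)"
    using assms(1) unfolding bicomplex_scalar_product_def by blast+
  have hp: "Re (bc_idem1 (sp Z Z)) \<ge> 0 \<and> Im (bc_idem1 (sp Z Z)) = 0 \<and> Re (bc_idem2 (sp Z Z)) \<ge> 0 \<and> Im (bc_idem2 (sp Z Z)) = 0" for Z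
    using assms(2) hyp_pos_idem unfolding hyperbolic_positive_def by blast
  have cs1: "(cmod (bc_idem1 (sp X Y)))\<^sup>2 \<le> Re (bc_idem1 (sp X X)) * Re (bc_idem1 (sp Y Y))"
  proof (rule cs_abstract[where f="\<lambda>X Y. bc_idem1 (sp X Y)" and ad=mod_add and sm="\<lambda>c Y. mod_smult (c,0) Y"])
    show "bc_idem1 (sp A (mod_add B C)) = bc_idem1 (sp A B) + bc_idem1 (sp A C)" for A B C
      by (simp only: spA idem_add)
    show "bc_idem1 (sp A (mod_smult (c,0) B)) = c * bc_idem1 (sp A B)" for A B c
      by (simp only: spS idem_mult idem_C)
    show "bc_idem1 (sp A B) = cnj (bc_idem1 (sp B A))" for A B
      by (subst spC) (simp only: idem_cnj)
    show "0 \<le> Re (bc_idem1 (sp A A))" for A using hp by blast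
  qed
  have cs2: "(cmod (bc_idem2 (sp X Y)))\<^sup>2 \<le> Re (bc_idem2 (sp X X)) * Re (bc_idem2 (sp Y Y))"
  proof (rule cs_abstract[where f="\<lambda>X Y. bc_idem2 (sp X Y)" and ad=mod_add and sm="\<lambda>c Y. mod_smult (c,0) Y"])
    show "bc_idem2 (sp A (mod_add B C)) = bc_idem2 (sp A B) + bc_idem2 (sp A C)" for A B C
      by (simp only: spA idem_add)
    show "bc_idem2 (sp A (mod_smult (c,0) B)) = c * bc_idem2 (sp A B)" for A B c
      by (simp only: spS idem_mult idem_C)
    show "bc_idem2 (sp A B) = cnj (bc_idem2 (sp B A))" for A B
      by (subst spC) (simp only: idem_cnj)
    show "0 \<le> Re (bc_idem2 (sp A A))" for A using hp by blast
  qed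
  define A1 where "A1 = Re (bc_idem1 (sp X X))"
  define A2 where "A2 = Re (bc_idem2 (sp X X))"
  define B1 where "B1 = Re (bc_idem1 (sp Y Y))"
  define B2 where "B2 = Re (bc_idem2 (sp Y Y))"
  have nn: "A1 \<ge> 0" "A2 \<ge> 0" "B1 \<ge> 0" "B2 \<ge> 0" using hp A1_def A2_def B1_def B2_def by auto
  let ?P = "bc_mult (hyp_sqrt (sp X X)) (hyp_sqrt (sp Y Y))"
  have P2: "(bc_norm ?P)\<^sup>2 = (A1 * B1 + A2 * B2) / 2"
    unfolding norm_idem idem_mult hyp_sqrt_idem A1_def[symmetric] A2_def[symmetric] B1_def[symmetric] B2_def[symmetric]
    using nn by (simp add: norm_mult power_mult_distrib)
  have S2: "(bc_norm (sp X Y))\<^sup>2 \<le> (A1 * B1 + A2 * B2) / 2"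
    unfolding norm_idem using cs1 cs2 A1_def A2_def B1_def B2_def by simp
  have NX: "(mod_norm sp X)\<^sup>2 = (A1 + A2) / 2"
    unfolding mod_norm_def norm_idem hyp_sqrt_idem A1_def[symmetric] A2_def[symmetric] using nn by simp
  have NY: "(mod_norm sp Y)\<^sup>2 = (B1 + B2) / 2"
    unfolding mod_norm_def norm_idem hyp_sqrt_idem B1_def[symmetric] B2_def[symmetric] using nn by simp
  have g0: "bc_norm w \<ge> 0" for w unfolding bc_norm_def by simp
  have m0: "mod_norm sp Z \<ge> 0" for Z unfolding mod_norm_def by (rule g0)
  have first: "bc_norm (sp X Y) \<le> bc_norm ?P"
    using S2 unfolding P2[symmetric] by (rule power2_le_imp_le[OF _ g0])
  have "(bc_norm ?P)\<^sup>2 \<le> (sqrt 2 * mod_norm sp X * mod_norm sp Y)\<^sup>2"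
  proof -
    have i: "A1*B1 + A2*B2 \<le> (A1+A2)*(B1+B2)"
      using mult_nonneg_nonneg[OF nn(1) nn(4)] mult_nonneg_nonneg[OF nn(2) nn(3)]
      by (simp add: distrib_left distrib_right)
    have e: "(sqrt 2 * mod_norm sp X * mod_norm sp Y)\<^sup>2 = (A1+A2)*(B1+B2)/2"
      unfolding power_mult_distrib NX NY by simp
    show ?thesis unfolding e P2 using i by simp
  qed
  hence "bc_norm ?P \<le> sqrt 2 * mod_norm sp X * mod_norm sp Y"
    by (rule power2_le_imp_le) (use m0 in simp)
  with first show ?thesis by simp
qed

end
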